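(* For any $f \in L^{\infty}([1,\infty))$ and $r > 0$, \[\lim_{x\to\infty}\frac{r}{x^r}\int_1^x f(t)t^{r-1}\,dt = \alpha\] if and only if \[\lim_{x\to\infty} r x^r \int_x^{\infty} f(t)\,\frac{dt}{t^{r+1}} = \alpha.\]
   Context: $L^{\infty}([1,\infty))$ denotes the essentially bounded measurable complex-valued functions on $[1,\infty)$; $\alpha$ is a complex number. *)

theory Defs
  imports "HOL-Analysis.Analysis"
begin

end

theory Submission
  imports Defs "HOL-Analysis.Analysis"
begin


lemma pow_deriv: "(x::real) > 0 \<Longrightarrow> e \<noteq> -1 \<Longrightarrow> ((\<lambda>x. x powr (e+1) / (e+1)) has_real_derivative x powr e) (at x)"
  using DERIV_cdivide[OF has_real_derivative_powr[of x "e+1"], of "e+1"] by simp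

lemma sigma_finite_lebesgue: "sigma_finite_measure (lebesgue :: real measure)"
proof
  obtain A where A: "countable A" "A \<subseteq> sets (lborel::real measure)" "\<Union>A = space lborel" "\<forall>a\<in>A. emeasure lborel a \<noteq> \<infinity>"
    using lborel.sigma_finite_countable by blast
  have h1: "A \<subseteq> sets lebesgue" using A(2) by (blast intro: sets_completionI_sets)
  have h2: "\<forall>a\<in>A. emeasure lebesgue a \<noteq> \<infinity>"
  proof
    fix a assume a: "a \<in> A"
    then have "a \<in> sets lborel" using A(2) by blast
    then have "emeasure lebesgue a = emeasure lborel (main_part lborel a)"
      by (intro emeasure_completion sets_completionI_sets)
    also have "main_part lborel a = a" by (rule main_part) fact
    finally have "emeasure lebesgue a = emeasure lborel a" .
    moreover have "emeasure lborel a \<noteq> \<infinity>" using A(4) a by blast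
    ultimately show "emeasure lebesgue a \<noteq> \<infinity>" by (simp only: not_False_eq_True)
  qed
  have h3: "\<Union> A = space lebesgue" using A(3) by (metis space_completion)
  show "\<exists>A. countable A \<and> A \<subseteq> sets (lebesgue::real measure) \<and> \<Union> A = space lebesgue \<and> (\<forall>a\<in>A. emeasure lebesgue a \<noteq> \<infinity>)"
    by (rule exI[of _ A]) (intro conjI A(1) h1 h2 h3)
qed

interpretation leb: sigma_finite_measure "lebesgue :: real measure" by (rule sigma_finite_lebesgue)
interpretation lebp: pair_sigma_finite "lebesgue :: real measure" "lebesgue :: real measure" ..

lemma id_leb[measurable]: "(\<lambda>x::real. x) \<in> borel_measurable lebesgue"
  by (rule measurable_completion) simp
lemma fst_leb[measurable]: "(\<lambda>p::real\<times>real. fst p) \<in> borel_measurable (lebesgue \<Otimes>\<^sub>M lebesgue)"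
  by (rule measurable_compose[OF measurable_fst id_leb])
lemma snd_leb[measurable]: "(\<lambda>p::real\<times>real. snd p) \<in> borel_measurable (lebesgue \<Otimes>\<^sub>M lebesgue)"
  by (rule measurable_compose[OF measurable_snd id_leb])

lemma pow_int_inf:
  fixes a e :: real assumes "e < -1" "a > 0"
  shows "integrable lebesgue (\<lambda>s. indicator {a..} s * s powr e)"
    "(\<integral>s. indicator {a..} s * s powr e \<partial>lebesgue) = -(a powr (e+1)) / (e+1)"
proof -
  have hi: "((\<lambda>x. x powr e) has_integral -(a powr (e+1)) / (e+1)) {a..}"
    by (rule has_integral_powr_to_inf[OF assms])
  have ai: "(\<lambda>x. x powr e) absolutely_integrable_on {a..}"
    by (rule nonnegative_absolutely_integrable_1) (use hi in \<open>auto simp: integrable_on_def\<close>)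
  then show "integrable lebesgue (\<lambda>s. indicator {a..} s * s powr e)"
    by (simp add: set_integrable_def)
  have "(LINT x:{a..}|lebesgue. x powr e) = integral {a..} (\<lambda>x. x powr e)"
    using set_lebesgue_integral_eq_integral(2)[OF ai] .
  also have "\<dots> = -(a powr (e+1)) / (e+1)" using hi by (rule integral_unique)
  finally show "(\<integral>s. indicator {a..} s * s powr e \<partial>lebesgue) = -(a powr (e+1)) / (e+1)"
    by (simp add: set_lebesgue_integral_def)
qed

lemma pow_int_fin:
  fixes a b e :: real assumes "e \<noteq> -1" "a > 0" "a \<le> b"
  shows "integrable lebesgue (\<lambda>s. indicator {a..b} s * s powr e)"
    "(\<integral>s. indicator {a..b} s * s powr e \<partial>lebesgue) = (b powr (e+1) - a powr (e+1)) / (e+1)"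
proof -
  have hi: "((\<lambda>x. x powr e) has_integral ((\<lambda>x. x powr (e+1) / (e+1)) b - (\<lambda>x. x powr (e+1) / (e+1)) a)) {a..b}"
  proof (rule fundamental_theorem_of_calculus[OF assms(3)])
    fix x assume "x \<in> {a..b}"
    then have "x > 0" using assms by auto
    then show "((\<lambda>x. x powr (e+1) / (e+1)) has_vector_derivative x powr e) (at x within {a..b})"
      using pow_deriv[of x e] assms(1)
      by (simp add: has_real_derivative_iff_has_vector_derivative[symmetric] has_field_derivative_at_within)
  qed
  have ai: "(\<lambda>x. x powr e) absolutely_integrable_on {a..b}"
    by (rule nonnegative_absolutely_integrable_1) (use hi in \<open>auto simp: integrable_on_def\<close>)
  then show "integrable lebesgue (\<lambda>s. indicator {a..b} s * s powr e)"
    by (simp add: set_integrable_def)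
  have "(LINT x:{a..b}|lebesgue. x powr e) = integral {a..b} (\<lambda>x. x powr e)"
    using set_lebesgue_integral_eq_integral(2)[OF ai] .
  also have "\<dots> = (b powr (e+1) - a powr (e+1)) / (e+1)" using integral_unique[OF hi]
    by (simp add: diff_divide_distrib)
  finally show "(\<integral>s. indicator {a..b} s * s powr e \<partial>lebesgue) = (b powr (e+1) - a powr (e+1)) / (e+1)"
    by (simp add: set_lebesgue_integral_def)
qed

lemma int_times_bdd:
  fixes k :: "real \<Rightarrow> real" and h :: "real \<Rightarrow> complex"
  assumes "integrable lebesgue k" "h \<in> borel_measurable lebesgue" "\<And>s. norm (h s) \<le> C"
  shows "integrable lebesgue (\<lambda>s. k s *\<^sub>R h s)"
proof (rule Bochner_Integration.integrable_bound[of _ "\<lambda>s. C * k s"])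
  show "integrable lebesgue (\<lambda>s. C * k s)" using assms(1) by simp
  show "(\<lambda>s. k s *\<^sub>R h s) \<in> borel_measurable lebesgue"
    by (rule borel_measurable_scaleR[OF borel_measurable_integrable[OF assms(1)] assms(2)])
  have C: "C \<ge> 0" using assms(3)[of 0] norm_ge_zero[of "h 0"] by linarith
  show "AE x in lebesgue. norm (k x *\<^sub>R h x) \<le> norm (C * k x)"
    using mult_right_mono[OF assms(3) abs_ge_zero] C by (intro AE_I2) (simp add: abs_mult mult.commute)
qed

lemma fub:
  fixes k :: "real \<times> real \<Rightarrow> real" and h :: "real \<Rightarrow> complex"
  assumes km[measurable]: "k \<in> borel_measurable (lebesgue \<Otimes>\<^sub>M lebesgue)" and kn: "\<And>p. k p \<ge> 0"
    and ks: "\<And>t. integrable lebesgue (\<lambda>s. k (t,s))"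
    and kt: "integrable lebesgue (\<lambda>t. \<integral>s. k (t,s) \<partial>lebesgue)"
    and ks2: "\<And>s. integrable lebesgue (\<lambda>t. k (t,s))"
    and hm[measurable]: "h \<in> borel_measurable lebesgue" and hb: "\<And>s. norm (h s) \<le> C"
  shows "(\<integral>t. (\<integral>s. k (t,s) *\<^sub>R h s \<partial>lebesgue) \<partial>lebesgue) = (\<integral>s. (\<integral>t. k (t,s) \<partial>lebesgue) *\<^sub>R h s \<partial>lebesgue)"
proof -
  have C: "C \<ge> 0" using hb[of 0] norm_ge_zero[of "h 0"] by linarith
  define \<Phi> where "\<Phi> = (\<lambda>p::real\<times>real. k p *\<^sub>R h (snd p))"
  have hs[measurable]: "(\<lambda>p::real\<times>real. h (snd p)) \<in> borel_measurable (lebesgue \<Otimes>\<^sub>M lebesgue)"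
    by (rule measurable_compose[OF measurable_snd hm])
  have \<Phi>m[measurable]: "\<Phi> \<in> borel_measurable (lebesgue \<Otimes>\<^sub>M lebesgue)"
    unfolding \<Phi>_def by measurable
  have sl: "integrable lebesgue (\<lambda>s. \<Phi> (t,s))" for t
    unfolding \<Phi>_def using int_times_bdd[OF ks hm hb] by simp
  have nm: "(\<lambda>t. \<integral>s. norm (\<Phi> (t,s)) \<partial>lebesgue) \<in> borel_measurable lebesgue"
    by measurable
  have "integrable lebesgue (\<lambda>t. \<integral>s. norm (\<Phi> (t,s)) \<partial>lebesgue)"
  proof (rule Bochner_Integration.integrable_bound[OF _ nm])
    show "integrable lebesgue (\<lambda>t. C * (\<integral>s. k (t,s) \<partial>lebesgue))" using kt by simp
    show "AE t in lebesgue. norm (\<integral>s. norm (\<Phi> (t,s)) \<partial>lebesgue) \<le> norm (C * (\<integral>s. k (t,s) \<partial>lebesgue))"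
    proof (rule AE_I2)
      fix t
      have pt: "norm (\<Phi> (t,s)) \<le> C * k (t,s)" for s
        using mult_right_mono[OF hb[of s] kn[of "(t,s)"]] kn[of "(t,s)"] by (simp add: \<Phi>_def mult.commute)
      have "(\<integral>s. norm (\<Phi> (t,s)) \<partial>lebesgue) \<le> (\<integral>s. C * k (t,s) \<partial>lebesgue)"
        by (rule integral_mono[OF integrable_norm[OF sl] integrable_mult_right[OF ks] pt])
      moreover have "0 \<le> (\<integral>s. norm (\<Phi> (t,s)) \<partial>lebesgue)" by simp
      moreover have "0 \<le> (\<integral>s. k (t,s) \<partial>lebesgue)" using kn by simp
      ultimately show "norm (\<integral>s. norm (\<Phi> (t,s)) \<partial>lebesgue) \<le> norm (C * (\<integral>s. k (t,s) \<partial>lebesgue))"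
        using C by simp
    qed
  qed
  then have int: "integrable (lebesgue \<Otimes>\<^sub>M lebesgue) \<Phi>"
    using sl by (intro lebp.Fubini_integrable) auto
  have "(\<integral>s. (\<integral>t. \<Phi> (t,s) \<partial>lebesgue) \<partial>lebesgue) = (\<integral>t. (\<integral>s. \<Phi> (t,s) \<partial>lebesgue) \<partial>lebesgue)"
    using lebp.Fubini_integral[of "\<lambda>t s. \<Phi> (t,s)"] int by simp
  moreover have "(\<integral>t. \<Phi> (t,s) \<partial>lebesgue) = (\<integral>t. k (t,s) \<partial>lebesgue) *\<^sub>R h s" for s
    unfolding \<Phi>_def using ks2 by simp
  ultimately show ?thesis unfolding \<Phi>_def by simp
qed


lemma ae_ne: "AE s in lebesgue. s \<noteq> (x::real)"
  by (rule AE_completion[OF AE_lborel_singleton])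

lemma powr_leb[measurable]: "(\<lambda>s::real. s powr e) \<in> borel_measurable lebesgue"
  by measurable

lemma ioi_conv:
  fixes h :: "real \<Rightarrow> complex"
  assumes [measurable]: "h \<in> borel_measurable lebesgue"
  shows "(\<integral>s. (indicator {x<..} s * s powr e) *\<^sub>R h s \<partial>lebesgue) = (\<integral>s. (indicator {x..} s * s powr e) *\<^sub>R h s \<partial>lebesgue)"
  by (rule integral_cong_AE) (use ae_ne[of x] in \<open>auto simp: indicator_def elim!: eventually_mono\<close>)

lemma sc: "(c * (a + b)) *\<^sub>R (v::'a::real_vector) = c *\<^sub>R (a *\<^sub>R v + b *\<^sub>R v)"
  by (metis scaleR_scaleR scaleR_add_left)

lemma sc2: "(c * (a + b - d)) *\<^sub>R (v::'a::real_vector) = c *\<^sub>R (a *\<^sub>R v + b *\<^sub>R v - d *\<^sub>R v)"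
  by (metis scaleR_scaleR scaleR_add_left scaleR_diff_left)

locale stp =
  fixes r :: real and h :: "real \<Rightarrow> complex" and C :: real
  assumes r: "r > 0" and hm[measurable]: "h \<in> borel_measurable lebesgue"
    and hb: "\<And>s. norm (h s) \<le> C" and hz: "\<And>s. s < 1 \<Longrightarrow> h s = 0"
begin

definition FF where "FF x = (\<integral>s. (indicator {1..x} s * s powr (r-1)) *\<^sub>R h s \<partial>lebesgue)"
definition GG where "GG x = (\<integral>s. (indicator {x..} s * s powr (-r-1)) *\<^sub>R h s \<partial>lebesgue)"

lemma C: "C \<ge> 0" using hb[of 0] norm_ge_zero[of "h 0"] by linarith

lemma int_fin: "1 \<le> b \<Longrightarrow> e \<noteq> -1 \<Longrightarrow> integrable lebesgue (\<lambda>s. (indicator {1..b} s * s powr e) *\<^sub>R h s)"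
  by (rule int_times_bdd[OF pow_int_fin(1) hm hb]) auto

lemma int_inf: "a > 0 \<Longrightarrow> e < -1 \<Longrightarrow> integrable lebesgue (\<lambda>s. (indicator {a..} s * s powr e) *\<^sub>R h s)"
  by (rule int_times_bdd[OF pow_int_inf(1) hm hb]) auto

lemma int_ioi: "a > 0 \<Longrightarrow> e < -1 \<Longrightarrow> integrable lebesgue (\<lambda>s. (indicator {a<..} s * s powr e) *\<^sub>R h s)"
proof -
  assume a: "a > 0" "e < -1"
  have "integrable lebesgue (\<lambda>s. (indicator {a<..} s * s powr e) *\<^sub>R h s) \<longleftrightarrow>
        integrable lebesgue (\<lambda>s. (indicator {a..} s * s powr e) *\<^sub>R h s)"
    by (rule integrable_cong_AE) (use ae_ne[of a] in \<open>auto simp: indicator_def elim!: eventually_mono\<close>)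
  then show ?thesis using int_inf[OF a] by simp
qed

lemma I1:
  assumes x: "x \<ge> 1"
  shows "(\<integral>t. (indicator {x..} t * t powr (-2*r-1)) *\<^sub>R FF t \<partial>lebesgue)
       = (1/(2*r)) *\<^sub>R (x powr (-2*r) *\<^sub>R FF x + GG x)"
proof -
  define k where "k p = (if x \<le> fst p \<and> 1 \<le> snd p \<and> snd p \<le> fst p then fst p powr (-2*r-1) * snd p powr (r-1) else 0)" for p :: "real \<times> real"
  have km: "k \<in> borel_measurable (lebesgue \<Otimes>\<^sub>M lebesgue)"
    unfolding k_def by measurable
  have kn: "k p \<ge> 0" for p unfolding k_def by auto
  have S1: "(indicator {x..} t * t powr (-2*r-1)) *\<^sub>R FF t = (\<integral>s. k (t,s) *\<^sub>R h s \<partial>lebesgue)" for t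
    unfolding FF_def integral_scaleR_right[symmetric]
    by (rule Bochner_Integration.integral_cong) (auto simp: k_def indicator_def)
  have ks: "integrable lebesgue (\<lambda>s. k (t,s))" for t
  proof (cases "x \<le> t")
    case True
    then have "k (t,s) = t powr (-2*r-1) * (indicator {1..t} s * s powr (r-1))" for s
      using x by (auto simp: k_def indicator_def)
    then show ?thesis using pow_int_fin(1)[of "r-1" 1 t] True x r by simp
  next
    case False
    then have "k (t,s) = 0" for s by (auto simp: k_def)
    then show ?thesis by simp
  qed
  have kti: "(\<integral>s. k (t,s) \<partial>lebesgue) = (indicator {x..} t * t powr (-r-1) - indicator {x..} t * t powr (-2*r-1)) / r" for t
  proof (cases "x \<le> t")
    case True
    then have "k (t,s) = t powr (-2*r-1) * (indicator {1..t} s * s powr (r-1))" for s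
      using x by (auto simp: k_def indicator_def)
    then have "(\<integral>s. k (t,s) \<partial>lebesgue) = t powr (-2*r-1) * ((t powr (r-1+1) - 1 powr (r-1+1)) / (r-1+1))"
      using pow_int_fin(2)[of "r-1" 1 t] True x r by simp
    also have "\<dots> = (t powr (-r-1) - t powr (-2*r-1)) / r"
      using True x by (simp add: field_simps powr_add[symmetric])
    finally show ?thesis using True by simp
  next
    case False
    then have "k (t,s) = 0" for s by (auto simp: k_def)
    then show ?thesis using False by simp
  qed
  have kt: "integrable lebesgue (\<lambda>t. \<integral>s. k (t,s) \<partial>lebesgue)"
    unfolding kti using x r pow_int_inf(1)[of "-r-1" x] pow_int_inf(1)[of "-2*r-1" x]
    by (intro integrable_divide integrable_diff) auto
  have ks2: "integrable lebesgue (\<lambda>t. k (t,s))" for s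
  proof (cases "1 \<le> s")
    case True
    then have "k (t,s) = s powr (r-1) * (indicator {max x s..} t * t powr (-2*r-1))" for t
      by (auto simp: k_def indicator_def)
    then show ?thesis using pow_int_inf(1)[of "-2*r-1" "max x s"] True x r by simp
  next
    case False
    then have "k (t,s) = 0" for t by (auto simp: k_def)
    then show ?thesis by simp
  qed
  have kst: "(\<integral>t. k (t,s) \<partial>lebesgue) = (1/(2*r)) * (x powr (-2*r) * (indicator {1..x} s * s powr (r-1)) + indicator {x<..} s * s powr (-r-1))" for s
  proof (cases "1 \<le> s")
    case True
    then have "k (t,s) = s powr (r-1) * (indicator {max x s..} t * t powr (-2*r-1))" for t
      by (auto simp: k_def indicator_def)
    then have "(\<integral>t. k (t,s) \<partial>lebesgue) = s powr (r-1) * (-(max x s powr (-2*r-1+1)) / (-2*r-1+1))"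
      using pow_int_inf(2)[of "-2*r-1" "max x s"] True x r by simp
    also have "\<dots> = (1/(2*r)) * (x powr (-2*r) * (indicator {1..x} s * s powr (r-1)) + indicator {x<..} s * s powr (-r-1))"
    proof (cases "s \<le> x")
      case True
      then show ?thesis using \<open>1 \<le> s\<close> r by (simp add: indicator_def max_def field_simps)
    next
      case False
      then have "s powr (r-1) * s powr (-2*r) = s powr (-r-1)"
        using \<open>1 \<le> s\<close> by (simp add: powr_add[symmetric])
      then show ?thesis using False \<open>1 \<le> s\<close> r by (simp add: indicator_def max_def field_simps)
    qed
    finally show ?thesis .
  next
    case False
    then have "k (t,s) = 0" for t by (auto simp: k_def)
    then show ?thesis using False x by (simp add: indicator_def)
  qed
  have i1: "integrable lebesgue (\<lambda>s. (x powr (-2*r) * (indicator {1..x} s * s powr (r-1))) *\<^sub>R h s)"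
    using integrable_scaleR_right[OF int_fin[OF x, of "r-1"], of "x powr (-2*r)"] r by (simp add: scaleR_scaleR)
  have i2: "integrable lebesgue (\<lambda>s. (indicator {x<..} s * s powr (-r-1)) *\<^sub>R h s)"
    using int_ioi[of x "-r-1"] x r by simp
  have e1: "(\<integral>s. (x powr (-2*r) * (indicator {1..x} s * s powr (r-1))) *\<^sub>R h s \<partial>lebesgue) = x powr (-2*r) *\<^sub>R FF x"
    unfolding FF_def integral_scaleR_right[symmetric] by (simp only: scaleR_scaleR)
  have "(\<integral>t. (indicator {x..} t * t powr (-2*r-1)) *\<^sub>R FF t \<partial>lebesgue) = (\<integral>t. (\<integral>s. k (t,s) *\<^sub>R h s \<partial>lebesgue) \<partial>lebesgue)"
    using S1 by simp
  also have "\<dots> = (\<integral>s. (\<integral>t. k (t,s) \<partial>lebesgue) *\<^sub>R h s \<partial>lebesgue)"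
    by (rule fub[OF km kn ks kt ks2 hm hb])
  also have "\<dots> = (\<integral>s. (1/(2*r)) *\<^sub>R ((x powr (-2*r) * (indicator {1..x} s * s powr (r-1))) *\<^sub>R h s
                      + (indicator {x<..} s * s powr (-r-1)) *\<^sub>R h s) \<partial>lebesgue)"
    unfolding kst sc ..
  also have "\<dots> = (1/(2*r)) *\<^sub>R (x powr (-2*r) *\<^sub>R FF x + (\<integral>s. (indicator {x<..} s * s powr (-r-1)) *\<^sub>R h s \<partial>lebesgue))"
    using Bochner_Integration.integral_add[OF i1 i2] e1 by (simp only: integral_scaleR_right)
  also have "(\<integral>s. (indicator {x<..} s * s powr (-r-1)) *\<^sub>R h s \<partial>lebesgue) = GG x"
    unfolding GG_def by (rule ioi_conv[OF hm])
  finally show ?thesis .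
qed


lemma I2:
  assumes x: "x \<ge> 1"
  shows "(\<integral>t. (indicator {1..x} t * t powr (2*r-1)) *\<^sub>R GG t \<partial>lebesgue)
       = (1/(2*r)) *\<^sub>R (FF x + x powr (2*r) *\<^sub>R GG x - GG 1)"
proof -
  define k where "k p = (if 1 \<le> fst p \<and> fst p \<le> x \<and> fst p \<le> snd p then fst p powr (2*r-1) * snd p powr (-r-1) else 0)" for p :: "real \<times> real"
  have km: "k \<in> borel_measurable (lebesgue \<Otimes>\<^sub>M lebesgue)"
    unfolding k_def by measurable
  have kn: "k p \<ge> 0" for p unfolding k_def by auto
  have S1: "(indicator {1..x} t * t powr (2*r-1)) *\<^sub>R GG t = (\<integral>s. k (t,s) *\<^sub>R h s \<partial>lebesgue)" for t
    unfolding GG_def integral_scaleR_right[symmetric]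
    by (rule Bochner_Integration.integral_cong) (auto simp: k_def indicator_def)
  have ks: "integrable lebesgue (\<lambda>s. k (t,s))" for t
  proof (cases "1 \<le> t \<and> t \<le> x")
    case True
    then have "k (t,s) = t powr (2*r-1) * (indicator {t..} s * s powr (-r-1))" for s
      by (auto simp: k_def indicator_def)
    then show ?thesis using pow_int_inf(1)[of "-r-1" t] True r by simp
  next
    case False
    then have "k (t,s) = 0" for s by (auto simp: k_def)
    then show ?thesis by simp
  qed
  have kti: "(\<integral>s. k (t,s) \<partial>lebesgue) = (indicator {1..x} t * t powr (r-1)) / r" for t
  proof (cases "1 \<le> t \<and> t \<le> x")
    case True
    then have "k (t,s) = t powr (2*r-1) * (indicator {t..} s * s powr (-r-1))" for s
      by (auto simp: k_def indicator_def)
    then have "(\<integral>s. k (t,s) \<partial>lebesgue) = t powr (2*r-1) * (-(t powr (-r-1+1)) / (-r-1+1))"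
      using pow_int_inf(2)[of "-r-1" t] True r by simp
    also have "\<dots> = t powr (r-1) / r"
    proof -
      have "t powr (2*r-1) * t powr (-r) = t powr (r-1)" using True by (simp add: powr_add[symmetric])
      then show ?thesis using r by (simp add: field_simps)
    qed
    finally show ?thesis using True by simp
  next
    case False
    then have "k (t,s) = 0" for s by (auto simp: k_def)
    then show ?thesis using False by simp
  qed
  have kt: "integrable lebesgue (\<lambda>t. \<integral>s. k (t,s) \<partial>lebesgue)"
    unfolding kti using x r pow_int_fin(1)[of "r-1" 1 x]
    by (intro integrable_divide) auto
  have ks2: "integrable lebesgue (\<lambda>t. k (t,s))" for s
  proof (cases "1 \<le> s")
    case True
    then have "k (t,s) = s powr (-r-1) * (indicator {1..min x s} t * t powr (2*r-1))" for t
      by (auto simp: k_def indicator_def)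
    then show ?thesis using pow_int_fin(1)[of "2*r-1" 1 "min x s"] True x r by simp
  next
    case False
    then have "k (t,s) = 0" for t by (auto simp: k_def)
    then show ?thesis by simp
  qed
  have kst: "(\<integral>t. k (t,s) \<partial>lebesgue) = (1/(2*r)) * (indicator {1..x} s * s powr (r-1) + x powr (2*r) * (indicator {x<..} s * s powr (-r-1)) - indicator {1..} s * s powr (-r-1))" for s
  proof (cases "1 \<le> s")
    case True
    then have "k (t,s) = s powr (-r-1) * (indicator {1..min x s} t * t powr (2*r-1))" for t
      by (auto simp: k_def indicator_def)
    then have "(\<integral>t. k (t,s) \<partial>lebesgue) = s powr (-r-1) * ((min x s powr (2*r-1+1) - 1 powr (2*r-1+1)) / (2*r-1+1))"
      using pow_int_fin(2)[of "2*r-1" 1 "min x s"] True x r by simp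
    also have "\<dots> = (1/(2*r)) * (indicator {1..x} s * s powr (r-1) + x powr (2*r) * (indicator {x<..} s * s powr (-r-1)) - indicator {1..} s * s powr (-r-1))"
    proof (cases "s \<le> x")
      case True
      then have "s powr (-r-1) * s powr (2*r) = s powr (r-1)"
        using \<open>1 \<le> s\<close> by (simp add: powr_add[symmetric])
      then show ?thesis using True \<open>1 \<le> s\<close> r by (simp add: indicator_def min_def field_simps)
    next
      case False
      then show ?thesis using False \<open>1 \<le> s\<close> r by (simp add: indicator_def min_def field_simps)
    qed
    finally show ?thesis .
  next
    case False
    then have "k (t,s) = 0" for t by (auto simp: k_def)
    then show ?thesis using False x by (simp add: indicator_def)
  qed
  have i1: "integrable lebesgue (\<lambda>s. (indicator {1..x} s * s powr (r-1)) *\<^sub>R h s)"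
    using int_fin[OF x, of "r-1"] r by simp
  have i2: "integrable lebesgue (\<lambda>s. (x powr (2*r) * (indicator {x<..} s * s powr (-r-1))) *\<^sub>R h s)"
    using integrable_scaleR_right[OF int_ioi[of x "-r-1"], of "x powr (2*r)"] x r by (simp add: scaleR_scaleR)
  have i3: "integrable lebesgue (\<lambda>s. (indicator {1..} s * s powr (-r-1)) *\<^sub>R h s)"
    using int_inf[of 1 "-r-1"] r by simp
  have e2: "(\<integral>s. (x powr (2*r) * (indicator {x<..} s * s powr (-r-1))) *\<^sub>R h s \<partial>lebesgue) = x powr (2*r) *\<^sub>R GG x"
    unfolding GG_def ioi_conv[OF hm, symmetric] integral_scaleR_right[symmetric] by (simp only: scaleR_scaleR)
  have "(\<integral>t. (indicator {1..x} t * t powr (2*r-1)) *\<^sub>R GG t \<partial>lebesgue) = (\<integral>t. (\<integral>s. k (t,s) *\<^sub>R h s \<partial>lebesgue) \<partial>lebesgue)"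
    using S1 by simp
  also have "\<dots> = (\<integral>s. (\<integral>t. k (t,s) \<partial>lebesgue) *\<^sub>R h s \<partial>lebesgue)"
    by (rule fub[OF km kn ks kt ks2 hm hb])
  also have "\<dots> = (\<integral>s. (1/(2*r)) *\<^sub>R ((indicator {1..x} s * s powr (r-1)) *\<^sub>R h s
                      + (x powr (2*r) * (indicator {x<..} s * s powr (-r-1))) *\<^sub>R h s
                      - (indicator {1..} s * s powr (-r-1)) *\<^sub>R h s) \<partial>lebesgue)"
    unfolding kst sc2 ..
  also have "\<dots> = (1/(2*r)) *\<^sub>R (FF x + x powr (2*r) *\<^sub>R GG x - GG 1)"
    using Bochner_Integration.integral_diff[OF Bochner_Integration.integrable_add[OF i1 i2] i3]
      Bochner_Integration.integral_add[OF i1 i2] e2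
    unfolding FF_def GG_def by (simp only: integral_scaleR_right)
  finally show ?thesis .
qed

end


lemma int_times_bdd2:
  fixes k :: "real \<Rightarrow> real" and h :: "real \<Rightarrow> complex"
  assumes "integrable lebesgue k" "h \<in> borel_measurable lebesgue" "\<And>s. k s \<noteq> 0 \<Longrightarrow> norm (h s) \<le> C"
  shows "integrable lebesgue (\<lambda>s. k s *\<^sub>R h s)"
proof (rule Bochner_Integration.integrable_bound[of _ "\<lambda>s. C * k s"])
  show "integrable lebesgue (\<lambda>s. C * k s)" using assms(1) by simp
  show "(\<lambda>s. k s *\<^sub>R h s) \<in> borel_measurable lebesgue"
    by (rule borel_measurable_scaleR[OF borel_measurable_integrable[OF assms(1)] assms(2)])
  show "AE x in lebesgue. norm (k x *\<^sub>R h x) \<le> norm (C * k x)"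
  proof (rule AE_I2)
    fix x show "norm (k x *\<^sub>R h x) \<le> norm (C * k x)"
    proof (cases "k x = 0")
      case False
      then have "norm (h x) \<le> C" by (rule assms(3))
      moreover have "C \<ge> 0" using \<open>norm (h x) \<le> C\<close> norm_ge_zero[of "h x"] by linarith
      ultimately show ?thesis using mult_right_mono[OF \<open>norm (h x) \<le> C\<close> abs_ge_zero[of "k x"]]
        by (simp add: abs_mult mult.commute)
    qed simp
  qed
qed

lemma norm_int_bound:
  fixes k :: "real \<Rightarrow> real" and h :: "real \<Rightarrow> complex"
  assumes ki: "integrable lebesgue k" and kn: "\<And>s. k s \<ge> 0" and hm: "h \<in> borel_measurable lebesgue"
    and hb: "\<And>s. k s \<noteq> 0 \<Longrightarrow> norm (h s) \<le> E"
  shows "norm (\<integral>s. k s *\<^sub>R h s \<partial>lebesgue) \<le> E * (\<integral>s. k s \<partial>lebesgue)"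
proof -
  have pt: "norm (k s *\<^sub>R h s) \<le> E * k s" for s
  proof (cases "k s = 0")
    case False
    then show ?thesis using mult_right_mono[OF hb[OF False] kn[of s]] kn[of s] by (simp add: mult.commute)
  qed simp
  have "norm (\<integral>s. k s *\<^sub>R h s \<partial>lebesgue) \<le> (\<integral>s. norm (k s *\<^sub>R h s) \<partial>lebesgue)"
    by (rule integral_norm_bound)
  also have "\<dots> \<le> (\<integral>s. E * k s \<partial>lebesgue)"
    by (rule integral_mono[OF integrable_norm[OF int_times_bdd2[OF ki hm hb]] integrable_mult_right[OF ki] pt])
  finally show ?thesis by simp
qed

lemma L1:
  fixes A :: "real \<Rightarrow> complex"
  assumes Am: "A \<in> borel_measurable lebesgue" and Ab: "\<And>t. t \<ge> 1 \<Longrightarrow> norm (A t) \<le> D"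
    and lim: "(A \<longlongrightarrow> \<alpha>) at_top" and r: "r > 0"
  shows "((\<lambda>x. (r * x powr r) *\<^sub>R (\<integral>t. (indicator {x..} t * t powr (-r-1)) *\<^sub>R A t \<partial>lebesgue)) \<longlongrightarrow> \<alpha>) at_top"
  unfolding tendsto_iff
proof (intro allI impI)
  fix e :: real assume e: "e > 0"
  have e2: "e/2 > 0" using e by simp
  have "\<forall>\<^sub>F t in at_top. dist (A t) \<alpha> < e/2" using lim e2 unfolding tendsto_iff by blast
  then obtain X where X: "\<And>t. t \<ge> X \<Longrightarrow> dist (A t) \<alpha> < e/2" by (auto simp: eventually_at_top_linorder)
  show "\<forall>\<^sub>F x in at_top. dist ((r * x powr r) *\<^sub>R (\<integral>t. (indicator {x..} t * t powr (-r-1)) *\<^sub>R A t \<partial>lebesgue)) \<alpha> < e"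
    unfolding eventually_at_top_linorder
  proof (intro exI[of _ "max X 1"] allI impI)
    fix x assume x: "x \<ge> max X 1"
    define k where "k t = indicator {x..} t * t powr (-r-1)" for t
    have ki: "integrable lebesgue k" unfolding k_def using pow_int_inf(1)[of "-r-1" x] x r by simp
    have kv: "(\<integral>t. k t \<partial>lebesgue) = x powr (-r) / r"
      unfolding k_def using pow_int_inf(2)[of "-r-1" x] x r by simp
    have kn: "k t \<ge> 0" for t unfolding k_def by simp
    have k0: "k t \<noteq> 0 \<Longrightarrow> t \<ge> x" for t unfolding k_def by (auto simp: indicator_def)
    have i1: "integrable lebesgue (\<lambda>t. k t *\<^sub>R A t)"
    proof (rule int_times_bdd2[OF ki Am, of D])
      fix t assume "k t \<noteq> 0"
      then have "t \<ge> 1" using k0 x by force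
      then show "norm (A t) \<le> D" by (rule Ab)
    qed
    have i2: "integrable lebesgue (\<lambda>t. k t *\<^sub>R \<alpha>)" using ki by simp
    have nb: "norm (\<integral>t. k t *\<^sub>R (A t - \<alpha>) \<partial>lebesgue) \<le> (e/2) * (\<integral>t. k t \<partial>lebesgue)"
    proof (rule norm_int_bound[OF ki kn])
      show "(\<lambda>t. A t - \<alpha>) \<in> borel_measurable lebesgue" using Am by simp
      fix s assume "k s \<noteq> 0"
      then have "s \<ge> X" using k0 x by force
      then show "norm (A s - \<alpha>) \<le> e/2" using X[of s] by (simp add: dist_norm)
    qed
    have "(r * x powr r) *\<^sub>R (\<integral>t. k t *\<^sub>R A t \<partial>lebesgue) - \<alpha>
        = (r * x powr r) *\<^sub>R (\<integral>t. k t *\<^sub>R (A t - \<alpha>) \<partial>lebesgue)"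
    proof -
      have "(\<integral>t. k t *\<^sub>R (A t - \<alpha>) \<partial>lebesgue) = (\<integral>t. k t *\<^sub>R A t \<partial>lebesgue) - (\<integral>t. k t *\<^sub>R \<alpha> \<partial>lebesgue)"
        unfolding scaleR_diff_right by (rule Bochner_Integration.integral_diff[OF i1 i2])
      moreover have "(\<integral>t. k t *\<^sub>R \<alpha> \<partial>lebesgue) = (x powr (-r) / r) *\<^sub>R \<alpha>"
        using kv ki by simp
      moreover have "(r * x powr r) * (x powr (-r) / r) = 1"
        using r x by (simp add: powr_minus field_simps)
      ultimately show ?thesis by (simp add: scaleR_diff_right)
    qed
    also have "norm \<dots> \<le> (r * x powr r) * ((e/2) * (\<integral>t. k t \<partial>lebesgue))"
      using mult_left_mono[OF nb, of "r * x powr r"] r by simp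
    also have "\<dots> = e/2" unfolding kv using r x by (simp add: powr_minus field_simps)
    finally show "dist ((r * x powr r) *\<^sub>R (\<integral>t. (indicator {x..} t * t powr (-r-1)) *\<^sub>R A t \<partial>lebesgue)) \<alpha> < e"
      unfolding k_def dist_norm using e by simp
  qed
qed


lemma L2:
  fixes B :: "real \<Rightarrow> complex"
  assumes Bm: "B \<in> borel_measurable lebesgue" and Bb: "\<And>t. t \<ge> 1 \<Longrightarrow> norm (B t) \<le> D"
    and lim: "(B \<longlongrightarrow> \<alpha>) at_top" and r: "r > 0"
  shows "((\<lambda>x. (r / x powr r) *\<^sub>R (\<integral>t. (indicator {1..x} t * t powr (r-1)) *\<^sub>R B t \<partial>lebesgue)) \<longlongrightarrow> \<alpha>) at_top"
  unfolding tendsto_iff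
proof (intro allI impI)
  fix e :: real assume e: "e > 0"
  define \<epsilon> where "\<epsilon> = e/3"
  have \<epsilon>: "\<epsilon> > 0" using e by (simp add: \<epsilon>_def)
  have "\<forall>\<^sub>F t in at_top. dist (B t) \<alpha> < \<epsilon>" using lim \<epsilon> unfolding tendsto_iff by blast
  then obtain X where X: "\<And>t. t \<ge> X \<Longrightarrow> dist (B t) \<alpha> < \<epsilon>" by (auto simp: eventually_at_top_linorder)
  define X1 where "X1 = max X 1"
  have X1: "X1 \<ge> 1" "X1 \<ge> X" by (auto simp: X1_def)
  define M where "M = D + norm \<alpha>"
  have M: "M \<ge> 0" using Bb[of 1] norm_ge_zero[of "B 1"] norm_ge_zero[of \<alpha>] unfolding M_def by linarith
  define K where "K = M * X1 powr r + norm \<alpha>"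
  have "((\<lambda>x::real. x powr (-r)) \<longlongrightarrow> 0) at_top"
    using r by (intro tendsto_neg_powr filterlim_ident) auto
  then have "((\<lambda>x::real. K * x powr (-r)) \<longlongrightarrow> 0) at_top"
    by (rule tendsto_mult_right_zero)
  then have "\<forall>\<^sub>F x in at_top. K * x powr (-r) < \<epsilon>" using \<epsilon> by (rule order_tendstoD(2))
  then obtain N where N: "\<And>x. x \<ge> N \<Longrightarrow> K * x powr (-r) < \<epsilon>" by (auto simp: eventually_at_top_linorder)
  show "\<forall>\<^sub>F x in at_top. dist ((r / x powr r) *\<^sub>R (\<integral>t. (indicator {1..x} t * t powr (r-1)) *\<^sub>R B t \<partial>lebesgue)) \<alpha> < e"
    unfolding eventually_at_top_linorder
  proof (intro exI[of _ "max N X1"] allI impI)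
    fix x assume x: "x \<ge> max N X1"
    then have x1: "x \<ge> 1" "x \<ge> X1" "x \<ge> N" using X1 by auto
    define k where "k t = indicator {1..x} t * t powr (r-1)" for t
    have ki: "integrable lebesgue k" unfolding k_def using pow_int_fin(1)[of "r-1" 1 x] x1 r by simp
    have kv: "(\<integral>t. k t \<partial>lebesgue) = (x powr r - 1) / r"
      unfolding k_def using pow_int_fin(2)[of "r-1" 1 x] x1 r by simp
    have kn: "k t \<ge> 0" for t unfolding k_def by simp
    have k0: "k t \<noteq> 0 \<Longrightarrow> 1 \<le> t \<and> t \<le> x" for t unfolding k_def by (auto simp: indicator_def)
    have i1: "integrable lebesgue (\<lambda>t. k t *\<^sub>R B t)"
    proof (rule int_times_bdd2[OF ki Bm, of D])
      fix t assume "k t \<noteq> 0"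
      then have "t \<ge> 1" using k0 by force
      then show "norm (B t) \<le> D" by (rule Bb)
    qed
    have i2: "integrable lebesgue (\<lambda>t. k t *\<^sub>R \<alpha>)" using ki by simp
    have i3: "integrable lebesgue (\<lambda>t. k t *\<^sub>R (B t - \<alpha>))"
      unfolding scaleR_diff_right by (rule Bochner_Integration.integrable_diff[OF i1 i2])
    define g where "g t = M * (indicator {1..X1} t * t powr (r-1)) + \<epsilon> * k t" for t
    have gi: "integrable lebesgue g"
      unfolding g_def using pow_int_fin(1)[of "r-1" 1 X1] X1 r ki by simp
    have gv: "(\<integral>t. g t \<partial>lebesgue) = M * ((X1 powr r - 1) / r) + \<epsilon> * ((x powr r - 1) / r)"
      unfolding g_def using pow_int_fin(1,2)[of "r-1" 1 X1] X1 r ki kv by simp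
    have pt: "norm (k t *\<^sub>R (B t - \<alpha>)) \<le> g t" for t
    proof (cases "k t = 0")
      case True
      then show ?thesis using M \<epsilon> kn[of t] by (simp add: g_def)
    next
      case False
      then have t: "1 \<le> t" "t \<le> x" using k0 by auto
      have kt: "k t = t powr (r-1)" using t by (simp add: k_def)
      show ?thesis
      proof (cases "t \<le> X1")
        case True
        have "norm (B t - \<alpha>) \<le> M" using Bb[OF t(1)] norm_triangle_ineq4[of "B t" \<alpha>] by (simp add: M_def)
        then have "norm (k t *\<^sub>R (B t - \<alpha>)) \<le> M * k t"
          using kn[of t] by (metis mult.commute mult_right_mono norm_scaleR abs_of_nonneg)
        moreover have "M * k t \<le> g t" using True t kt \<epsilon> kn[of t] by (simp add: g_def indicator_def)
        ultimately show ?thesis by (rule order_trans)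
      next
        case False
        then have "norm (B t - \<alpha>) \<le> \<epsilon>" using X[of t] X1 by (simp add: dist_norm)
        then have "norm (k t *\<^sub>R (B t - \<alpha>)) \<le> \<epsilon> * k t"
          using kn[of t] by (metis mult.commute mult_right_mono norm_scaleR abs_of_nonneg)
        moreover have "\<epsilon> * k t \<le> g t" using False t M kt by (simp add: g_def indicator_def)
        ultimately show ?thesis by (rule order_trans)
      qed
    qed
    have nb: "norm (\<integral>t. k t *\<^sub>R (B t - \<alpha>) \<partial>lebesgue) \<le> M * ((X1 powr r - 1) / r) + \<epsilon> * ((x powr r - 1) / r)"
      using integral_norm_bound[of lebesgue "\<lambda>t. k t *\<^sub>R (B t - \<alpha>)"]
        integral_mono[OF integrable_norm[OF i3] gi pt] gv by linarith
    have xp: "x powr r > 0" using x1 by simp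
    have eq: "(r / x powr r) *\<^sub>R (\<integral>t. k t *\<^sub>R B t \<partial>lebesgue) - \<alpha>
        = (r / x powr r) *\<^sub>R (\<integral>t. k t *\<^sub>R (B t - \<alpha>) \<partial>lebesgue) - (1 / x powr r) *\<^sub>R \<alpha>"
    proof -
      have "(\<integral>t. k t *\<^sub>R (B t - \<alpha>) \<partial>lebesgue) = (\<integral>t. k t *\<^sub>R B t \<partial>lebesgue) - (\<integral>t. k t *\<^sub>R \<alpha> \<partial>lebesgue)"
        unfolding scaleR_diff_right by (rule Bochner_Integration.integral_diff[OF i1 i2])
      moreover have "(\<integral>t. k t *\<^sub>R \<alpha> \<partial>lebesgue) = ((x powr r - 1) / r) *\<^sub>R \<alpha>"
        using kv ki by simp
      moreover have "(r / x powr r) * ((x powr r - 1) / r) = 1 - 1 / x powr r"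
        using r xp by (simp add: field_simps)
      ultimately show ?thesis by (simp add: scaleR_diff_right scaleR_diff_left)
    qed
    have "norm ((r / x powr r) *\<^sub>R (\<integral>t. k t *\<^sub>R B t \<partial>lebesgue) - \<alpha>)
        \<le> (r / x powr r) * norm (\<integral>t. k t *\<^sub>R (B t - \<alpha>) \<partial>lebesgue) + (1 / x powr r) * norm \<alpha>"
      unfolding eq
    proof -
      have n1: "norm ((r / x powr r) *\<^sub>R (\<integral>t. k t *\<^sub>R (B t - \<alpha>) \<partial>lebesgue)) = (r / x powr r) * norm (\<integral>t. k t *\<^sub>R (B t - \<alpha>) \<partial>lebesgue)"
        using r xp by simp
      have n2: "norm ((1 / x powr r) *\<^sub>R \<alpha>) = (1 / x powr r) * norm \<alpha>" using xp by simp
      show "norm ((r / x powr r) *\<^sub>R (\<integral>t. k t *\<^sub>R (B t - \<alpha>) \<partial>lebesgue) - (1 / x powr r) *\<^sub>R \<alpha>)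
        \<le> (r / x powr r) * norm (\<integral>t. k t *\<^sub>R (B t - \<alpha>) \<partial>lebesgue) + (1 / x powr r) * norm \<alpha>"
        using norm_triangle_ineq4[of "(r / x powr r) *\<^sub>R (\<integral>t. k t *\<^sub>R (B t - \<alpha>) \<partial>lebesgue)" "(1 / x powr r) *\<^sub>R \<alpha>"]
        unfolding n1 n2 .
    qed
    also have "\<dots> \<le> (r / x powr r) * (M * ((X1 powr r - 1) / r) + \<epsilon> * ((x powr r - 1) / r)) + (1 / x powr r) * norm \<alpha>"
      using mult_left_mono[OF nb, of "r / x powr r"] r xp by simp
    also have "\<dots> = (M * (X1 powr r - 1) + norm \<alpha>) / x powr r + \<epsilon> * (1 - 1 / x powr r)"
      using r xp by (simp add: field_simps)
    also have "\<dots> \<le> K * x powr (-r) + \<epsilon>"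
    proof -
      have "(M * (X1 powr r - 1) + norm \<alpha>) / x powr r \<le> K / x powr r"
        using M xp by (intro divide_right_mono) (auto simp: K_def algebra_simps)
      moreover have "\<epsilon> * (1 - 1 / x powr r) \<le> \<epsilon>" using \<epsilon> xp by (simp add: field_simps)
      ultimately show ?thesis by (simp add: powr_minus divide_inverse)
    qed
    also have "\<dots> < e" using N[OF x1(3)] \<epsilon> by (simp add: \<epsilon>_def)
    finally show "dist ((r / x powr r) *\<^sub>R (\<integral>t. (indicator {1..x} t * t powr (r-1)) *\<^sub>R B t \<partial>lebesgue)) \<alpha> < e"
      unfolding k_def dist_norm .
  qed
qed



lemma vec1: "2 *\<^sub>R (a *\<^sub>R (b *\<^sub>R (c *\<^sub>R (d *\<^sub>R F + G)))) - e *\<^sub>R F = (2*a*b*c*d - e) *\<^sub>R F + (2*a*b*c) *\<^sub>R (G::'a::real_vector)"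
  by (simp add: scaleR_add_right scaleR_diff_left scaleR_add_left algebra_simps)

lemma vec2: "2 *\<^sub>R (a *\<^sub>R (b *\<^sub>R (c *\<^sub>R (F + q *\<^sub>R G - G1)))) - e *\<^sub>R G + d *\<^sub>R G1
   = (2*a*b*c) *\<^sub>R F + (2*a*b*c*q - e) *\<^sub>R G + (d - 2*a*b*c) *\<^sub>R (G1::'a::real_vector)"
  by (simp add: scaleR_add_right scaleR_diff_right scaleR_diff_left scaleR_add_left algebra_simps)

context stp
begin

lemma FFm[measurable]: "FF \<in> borel_measurable lebesgue"
proof -
  have hs[measurable]: "(\<lambda>p::real\<times>real. h (snd p)) \<in> borel_measurable (lebesgue \<Otimes>\<^sub>M lebesgue)"
    by (rule measurable_compose[OF measurable_snd hm])
  have eq: "(\<lambda>(x,s). (indicator {1..x} s * s powr (r-1)) *\<^sub>R h s) =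
      (\<lambda>p::real\<times>real. ((if 1 \<le> snd p \<and> snd p \<le> fst p then 1 else 0) * snd p powr (r-1)) *\<^sub>R h (snd p))"
    by (auto simp: indicator_def fun_eq_iff)
  have "(\<lambda>(x,s). (indicator {1..x} s * s powr (r-1)) *\<^sub>R h s) \<in> borel_measurable (lebesgue \<Otimes>\<^sub>M lebesgue)"
    unfolding eq by measurable
  then show ?thesis unfolding FF_def by (rule leb.borel_measurable_lebesgue_integral)
qed

lemma GGm[measurable]: "GG \<in> borel_measurable lebesgue"
proof -
  have hs[measurable]: "(\<lambda>p::real\<times>real. h (snd p)) \<in> borel_measurable (lebesgue \<Otimes>\<^sub>M lebesgue)"
    by (rule measurable_compose[OF measurable_snd hm])
  have eq: "(\<lambda>(x,s). (indicator {x..} s * s powr (-r-1)) *\<^sub>R h s) =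
      (\<lambda>p::real\<times>real. ((if fst p \<le> snd p then 1 else 0) * snd p powr (-r-1)) *\<^sub>R h (snd p))"
    by (auto simp: indicator_def fun_eq_iff)
  have "(\<lambda>(x,s). (indicator {x..} s * s powr (-r-1)) *\<^sub>R h s) \<in> borel_measurable (lebesgue \<Otimes>\<^sub>M lebesgue)"
    unfolding eq by measurable
  then show ?thesis unfolding GG_def by (rule leb.borel_measurable_lebesgue_integral)
qed

lemma FFb: assumes x: "x \<ge> 1" shows "norm (FF x) \<le> C * (x powr r / r)"
proof -
  have "norm (FF x) \<le> C * (\<integral>s. indicator {1..x} s * s powr (r-1) \<partial>lebesgue)"
    unfolding FF_def using pow_int_fin(1)[of "r-1" 1 x] x r hb
    by (intro norm_int_bound) auto
  also have "\<dots> = C * ((x powr r - 1) / r)" using pow_int_fin(2)[of "r-1" 1 x] x r by simp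
  also have "\<dots> \<le> C * (x powr r / r)" using C r by (intro mult_left_mono divide_right_mono) auto
  finally show ?thesis .
qed

lemma GGb: assumes x: "x \<ge> 1" shows "norm (GG x) \<le> C * (x powr (-r) / r)"
proof -
  have "norm (GG x) \<le> C * (\<integral>s. indicator {x..} s * s powr (-r-1) \<partial>lebesgue)"
    unfolding GG_def using pow_int_inf(1)[of "-r-1" x] x r hb
    by (intro norm_int_bound) auto
  also have "\<dots> = C * (x powr (-r) / r)" using pow_int_inf(2)[of "-r-1" x] x r by simp
  finally show ?thesis .
qed

definition AA where "AA x = (r / x powr r) *\<^sub>R FF x"
definition BB where "BB x = (r * x powr r) *\<^sub>R GG x"

lemma AAm[measurable]: "AA \<in> borel_measurable lebesgue"
  unfolding AA_def by measurable

lemma BBm[measurable]: "BB \<in> borel_measurable lebesgue"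
  unfolding BB_def by measurable

lemma AAb: "x \<ge> 1 \<Longrightarrow> norm (AA x) \<le> C"
proof -
  assume x: "x \<ge> 1"
  have xp: "x powr r > 0" using x by simp
  have "norm (AA x) = (r / x powr r) * norm (FF x)" unfolding AA_def using r xp by simp
  also have "\<dots> \<le> (r / x powr r) * (C * (x powr r / r))" using FFb[OF x] r xp by (intro mult_left_mono) auto
  also have "\<dots> = C" using r xp by simp
  finally show ?thesis .
qed

lemma BBb: "x \<ge> 1 \<Longrightarrow> norm (BB x) \<le> C"
proof -
  assume x: "x \<ge> 1"
  have xp: "x powr r > 0" using x by simp
  have "norm (BB x) = (r * x powr r) * norm (GG x)" unfolding BB_def using r xp by simp
  also have "\<dots> \<le> (r * x powr r) * (C * (x powr (-r) / r))" using GGb[OF x] r xp by (intro mult_left_mono) auto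
  also have "\<dots> = C" using r xp by (simp add: powr_minus field_simps)
  finally show ?thesis .
qed

lemma R1:
  assumes x: "x \<ge> 1"
  shows "BB x = 2 *\<^sub>R ((r * x powr r) *\<^sub>R (\<integral>t. (indicator {x..} t * t powr (-r-1)) *\<^sub>R AA t \<partial>lebesgue)) - AA x"
proof -
  have xp: "x powr r > 0" using x by simp
  have "(\<integral>t. (indicator {x..} t * t powr (-r-1)) *\<^sub>R AA t \<partial>lebesgue)
      = (\<integral>t. r *\<^sub>R ((indicator {x..} t * t powr (-2*r-1)) *\<^sub>R FF t) \<partial>lebesgue)"
  proof (rule Bochner_Integration.integral_cong[OF refl])
    fix t
    show "(indicator {x..} t * t powr (-r-1)) *\<^sub>R AA t = r *\<^sub>R ((indicator {x..} t * t powr (-2*r-1)) *\<^sub>R FF t)"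
    proof (cases "x \<le> t")
      case True
      then have "t > 0" using x by simp
      then have "t powr (-r-1) / t powr r = t powr (-2*r-1)"
        by (simp add: powr_diff[symmetric])
      moreover have "t powr (-r-1) * (r / t powr r) = r * (t powr (-r-1) / t powr r)" by simp
      ultimately have "t powr (-r-1) * (r / t powr r) = r * t powr (-2*r-1)" by simp
      then show ?thesis using True unfolding AA_def by (simp add: scaleR_scaleR)
    qed (simp add: AA_def)
  qed
  also have "\<dots> = r *\<^sub>R ((1/(2*r)) *\<^sub>R (x powr (-2*r) *\<^sub>R FF x + GG x))"
    by (simp only: integral_scaleR_right I1[OF x])
  finally have eq: "(\<integral>t. (indicator {x..} t * t powr (-r-1)) *\<^sub>R AA t \<partial>lebesgue) = r *\<^sub>R ((1/(2*r)) *\<^sub>R (x powr (-2*r) *\<^sub>R FF x + GG x))" .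
  have q: "x powr (-2*r) = 1 / (x powr r * x powr r)"
    using x by (simp add: powr_minus powr_add[symmetric] divide_inverse)
  have c1: "2 * (r * x powr r) * r * (1/(2*r)) * x powr (-2*r) - r / x powr r = 0"
    unfolding q using r xp by (simp add: field_simps)
  have c2: "2 * (r * x powr r) * r * (1/(2*r)) = r * x powr r"
    using r by (simp add: field_simps)
  show ?thesis unfolding eq unfolding AA_def BB_def vec1 unfolding c1 unfolding c2 by simp
qed

lemma R2:
  assumes x: "x \<ge> 1"
  shows "AA x = 2 *\<^sub>R ((r / x powr r) *\<^sub>R (\<integral>t. (indicator {1..x} t * t powr (r-1)) *\<^sub>R BB t \<partial>lebesgue)) - BB x + (r / x powr r) *\<^sub>R GG 1"
proof -
  have xp: "x powr r > 0" using x by simp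
  have "(\<integral>t. (indicator {1..x} t * t powr (r-1)) *\<^sub>R BB t \<partial>lebesgue)
      = (\<integral>t. r *\<^sub>R ((indicator {1..x} t * t powr (2*r-1)) *\<^sub>R GG t) \<partial>lebesgue)"
  proof (rule Bochner_Integration.integral_cong[OF refl])
    fix t
    show "(indicator {1..x} t * t powr (r-1)) *\<^sub>R BB t = r *\<^sub>R ((indicator {1..x} t * t powr (2*r-1)) *\<^sub>R GG t)"
    proof (cases "1 \<le> t \<and> t \<le> x")
      case True
      then have "t > 0" by simp
      then have "t powr (r-1) * t powr r = t powr (2*r-1)"
        by (simp add: powr_add[symmetric])
      then have "t powr (r-1) * (r * t powr r) = r * t powr (2*r-1)" by (simp add: field_simps)
      then show ?thesis using True unfolding BB_def by (simp add: scaleR_scaleR)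
    qed (auto simp: BB_def)
  qed
  also have "\<dots> = r *\<^sub>R ((1/(2*r)) *\<^sub>R (FF x + x powr (2*r) *\<^sub>R GG x - GG 1))"
    by (simp only: integral_scaleR_right I2[OF x])
  finally have eq: "(\<integral>t. (indicator {1..x} t * t powr (r-1)) *\<^sub>R BB t \<partial>lebesgue) = r *\<^sub>R ((1/(2*r)) *\<^sub>R (FF x + x powr (2*r) *\<^sub>R GG x - GG 1))" .
  have q: "x powr (2*r) = x powr r * x powr r"
    using x by (simp add: powr_add[symmetric])
  have c1: "2 * (r / x powr r) * r * (1/(2*r)) = r / x powr r"
    using r by (simp add: field_simps)
  have c2: "2 * (r / x powr r) * r * (1/(2*r)) * x powr (2*r) - r * x powr r = 0"
    unfolding q using r xp by (simp add: field_simps)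
  have c3: "r / x powr r - 2 * (r / x powr r) * r * (1/(2*r)) = 0"
    using r by (simp add: field_simps)
  show ?thesis unfolding eq unfolding AA_def BB_def vec2 unfolding c2 c3 unfolding c1 by simp
qed

lemma main: "(AA \<longlongrightarrow> \<alpha>) at_top \<longleftrightarrow> (BB \<longlongrightarrow> \<alpha>) at_top"
proof
  assume A: "(AA \<longlongrightarrow> \<alpha>) at_top"
  have "((\<lambda>x. 2 *\<^sub>R ((r * x powr r) *\<^sub>R (\<integral>t. (indicator {x..} t * t powr (-r-1)) *\<^sub>R AA t \<partial>lebesgue)) - AA x) \<longlongrightarrow> 2 *\<^sub>R \<alpha> - \<alpha>) at_top"
    by (intro tendsto_intros L1[OF AAm AAb A r] A)
  then have "((\<lambda>x. 2 *\<^sub>R ((r * x powr r) *\<^sub>R (\<integral>t. (indicator {x..} t * t powr (-r-1)) *\<^sub>R AA t \<partial>lebesgue)) - AA x) \<longlongrightarrow> \<alpha>) at_top"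
    by (simp add: scaleR_2)
  moreover have "\<forall>\<^sub>F x in at_top. 2 *\<^sub>R ((r * x powr r) *\<^sub>R (\<integral>t. (indicator {x..} t * t powr (-r-1)) *\<^sub>R AA t \<partial>lebesgue)) - AA x = BB x"
    unfolding eventually_at_top_linorder by (intro exI[of _ 1] allI impI R1[symmetric])
  ultimately show "(BB \<longlongrightarrow> \<alpha>) at_top" by (rule Lim_transform_eventually)
next
  assume B: "(BB \<longlongrightarrow> \<alpha>) at_top"
  have "((\<lambda>x::real. x powr (-r)) \<longlongrightarrow> 0) at_top"
    using r by (intro tendsto_neg_powr filterlim_ident) auto
  then have "((\<lambda>x::real. r * x powr (-r)) \<longlongrightarrow> 0) at_top"
    by (rule tendsto_mult_right_zero)
  moreover have "\<forall>\<^sub>F x in at_top. r * x powr (-r) = r / x powr r"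
    by (simp add: powr_minus divide_inverse)
  ultimately have z: "((\<lambda>x::real. r / x powr r) \<longlongrightarrow> 0) at_top" by (rule Lim_transform_eventually)
  have "((\<lambda>x. 2 *\<^sub>R ((r / x powr r) *\<^sub>R (\<integral>t. (indicator {1..x} t * t powr (r-1)) *\<^sub>R BB t \<partial>lebesgue)) - BB x + (r / x powr r) *\<^sub>R GG 1) \<longlongrightarrow> 2 *\<^sub>R \<alpha> - \<alpha> + 0 *\<^sub>R GG 1) at_top"
    by (intro tendsto_intros L2[OF BBm BBb B r] B z)
  then have "((\<lambda>x. 2 *\<^sub>R ((r / x powr r) *\<^sub>R (\<integral>t. (indicator {1..x} t * t powr (r-1)) *\<^sub>R BB t \<partial>lebesgue)) - BB x + (r / x powr r) *\<^sub>R GG 1) \<longlongrightarrow> \<alpha>) at_top"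
    by (simp add: scaleR_2)
  moreover have "\<forall>\<^sub>F x in at_top. 2 *\<^sub>R ((r / x powr r) *\<^sub>R (\<integral>t. (indicator {1..x} t * t powr (r-1)) *\<^sub>R BB t \<partial>lebesgue)) - BB x + (r / x powr r) *\<^sub>R GG 1 = AA x"
    unfolding eventually_at_top_linorder by (intro exI[of _ 1] allI impI R2[symmetric])
  ultimately show "(AA \<longlongrightarrow> \<alpha>) at_top" by (rule Lim_transform_eventually)
qed

end


theorem corollary4p1:
  fixes f :: "real \<Rightarrow> complex" and r :: real and \<alpha> :: complex
  assumes meas: "set_borel_measurable lebesgue {1..} f"
    and bdd: "\<exists>C. AE t in lebesgue. t \<in> {1..} \<longrightarrow> norm (f t) \<le> C"
    and r: "r > 0"
  shows "((\<lambda>x. complex_of_real (r / x powr r) *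
            (LINT t:{1..x}|lebesgue. complex_of_real (t powr (r - 1)) * f t)) \<longlongrightarrow> \<alpha>) at_top
     \<longleftrightarrow> ((\<lambda>x. complex_of_real (r * x powr r) *
            (LINT t:{x..}|lebesgue. f t / complex_of_real (t powr (r + 1)))) \<longlongrightarrow> \<alpha>) at_top"
proof -
  obtain C0 where C0: "AE t in lebesgue. t \<in> {1..} \<longrightarrow> norm (f t) \<le> C0" using bdd by blast
  define C where "C = max C0 0"
  define g0 where "g0 t = indicator {1..} t *\<^sub>R f t" for t :: real
  have g0m[measurable]: "g0 \<in> borel_measurable lebesgue"
    using meas unfolding set_borel_measurable_def g0_def by simp
  define h where "h t = (if norm (g0 t) \<le> C then g0 t else 0)" for t
  have hm: "h \<in> borel_measurable lebesgue" unfolding h_def by measurable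
  have hb: "norm (h s) \<le> C" for s by (auto simp: h_def C_def)
  have hz: "s < 1 \<Longrightarrow> h s = 0" for s by (auto simp: h_def g0_def)
  interpret stp r h C using r hm hb hz by unfold_locales auto
  have ae: "AE t in lebesgue. g0 t = h t"
    using C0
  proof (rule eventually_mono)
    fix t assume "t \<in> {1..} \<longrightarrow> norm (f t) \<le> C0"
    then have "norm (g0 t) \<le> C" by (auto simp: g0_def C_def indicator_def)
    then show "g0 t = h t" by (simp add: h_def)
  qed
  have eF: "(LINT t:{1..x}|lebesgue. complex_of_real (t powr (r - 1)) * f t) = FF x" if x: "x \<ge> 1" for x
  proof -
    have "(LINT t:{1..x}|lebesgue. complex_of_real (t powr (r - 1)) * f t)
        = (\<integral>t. (indicator {1..x} t * t powr (r-1)) *\<^sub>R g0 t \<partial>lebesgue)"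
      unfolding set_lebesgue_integral_def
      by (rule Bochner_Integration.integral_cong[OF refl]) (auto simp: g0_def indicator_def scaleR_conv_of_real)
    also have "\<dots> = FF x" unfolding FF_def
      by (rule integral_cong_AE) (use ae hm in \<open>auto elim!: eventually_mono\<close>)
    finally show ?thesis .
  qed
  have eG: "(LINT t:{x..}|lebesgue. f t / complex_of_real (t powr (r + 1))) = GG x" if x: "x \<ge> 1" for x
  proof -
    have "(LINT t:{x..}|lebesgue. f t / complex_of_real (t powr (r + 1)))
        = (\<integral>t. (indicator {x..} t * t powr (-r-1)) *\<^sub>R g0 t \<partial>lebesgue)"
      unfolding set_lebesgue_integral_def
    proof (rule Bochner_Integration.integral_cong[OF refl])
      fix t
      show "indicator {x..} t *\<^sub>R (f t / complex_of_real (t powr (r + 1))) = (indicator {x..} t * t powr (-r-1)) *\<^sub>R g0 t"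
      proof (cases "x \<le> t")
        case True
        then have t: "t > 0" "t \<ge> 1" using x by auto
        have "t powr (-r-1) = inverse (t powr (r+1))"
          using t by (simp add: powr_minus[symmetric])
        then show ?thesis using True t
          by (simp add: g0_def indicator_def scaleR_conv_of_real divide_inverse mult.commute of_real_inverse)
      qed (simp add: indicator_def)
    qed
    also have "\<dots> = GG x" unfolding GG_def
      by (rule integral_cong_AE) (use ae hm in \<open>auto elim!: eventually_mono\<close>)
    finally show ?thesis .
  qed
  have "((\<lambda>x. complex_of_real (r / x powr r) *
            (LINT t:{1..x}|lebesgue. complex_of_real (t powr (r - 1)) * f t)) \<longlongrightarrow> \<alpha>) at_top
        \<longleftrightarrow> (AA \<longlongrightarrow> \<alpha>) at_top"
  proof (rule tendsto_cong)
    show "\<forall>\<^sub>F x in at_top. complex_of_real (r / x powr r) *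
            (LINT t:{1..x}|lebesgue. complex_of_real (t powr (r - 1)) * f t) = AA x"
      unfolding eventually_at_top_linorder
      by (intro exI[of _ 1] allI impI) (simp add: eF AA_def scaleR_conv_of_real)
  qed
  also have "\<dots> \<longleftrightarrow> (BB \<longlongrightarrow> \<alpha>) at_top" by (rule main)
  also have "\<dots> \<longleftrightarrow> ((\<lambda>x. complex_of_real (r * x powr r) *
            (LINT t:{x..}|lebesgue. f t / complex_of_real (t powr (r + 1)))) \<longlongrightarrow> \<alpha>) at_top"
  proof (rule tendsto_cong)
    show "\<forall>\<^sub>F x in at_top. BB x = complex_of_real (r * x powr r) *
            (LINT t:{x..}|lebesgue. f t / complex_of_real (t powr (r + 1)))"
      unfolding eventually_at_top_linorder
      by (intro exI[of _ 1] allI impI) (simp add: eG BB_def scaleR_conv_of_real)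
  qed
  finally show ?thesis .
qed

end
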